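(* Assume $-1\in\mathbb F^2$ and let $J=JCK(Z,\delta)$, with $Z$-basis $\{1,v_1,v_2,v_3\}$ of $J_{\bar0}$ and $\{y,y_1,y_2,y_3\}$ of $J_{\bar1}$ as in the context. Then there is an injective group homomorphism from the symmetric group $S_4$ into the automorphism group of $J$ (with image consisting of even $Z$-linear automorphisms) such that: $\tau_1=(1\,2)(3\,4)$ acts as the identity on $J^{[\bar0,\bar0]}\oplus J^{[\bar1,\bar1]}$ and as $-1$ on $J^{[\bar1,\bar0]}\oplus J^{[\bar0,\bar1]}$; $\tau_2=(2\,3)(4\,1)$ acts as the identity on $J^{[\bar0,\bar0]}\oplus J^{[\bar1,\bar0]}$ and as $-1$ on $J^{[\bar0,\bar1]}\oplus J^{[\bar1,\bar1]}$; $\varphi=(1\,2\,3)$ acts as the $Z$-linear map with $\varphi(1)=1$, $\varphi(y)=y$, $\varphi(v_i)=v_{i+1}$, $\varphi(y_i)=y_{i+1}$ (indices mod 3); $\tau=(1\,2)$ acts as the $Z$-linear map with $\tau(1)=1$, $\tau(y)=y$, $\tau(v_1)=-v_2$, $\tau(v_2)=-v_1$, $\tau(v_3)=-v_3$, $\tau(y_1)=-y_2$, $\tau(y_2)=-y_1$, $\tau(y_3)=-y_3$.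
   Context: Let $\mathbb F$ be a field of characteristic $\neq 2$, $Z$ a unital commutative associative $\mathbb F$-algebra, and $\delta$ a derivation of $Z$ such that $Z\delta(Z)=Z$ (the $\mathbb F$-span of all products $f\delta(g)$, $f,g\in Z$, is $Z$). The Cheng-Kac Jordan superalgebra $J=JCK(Z,\delta)=J_{\bar0}\oplus J_{\bar1}$ is defined as follows: $J_{\bar0}=Z1\oplus Zw_1\oplus Zw_2\oplus Zw_3$ and $J_{\bar1}=Zx\oplus Zx_1\oplus Zx_2\oplus Zx_3$ are free $Z$-modules of rank 4; $J_{\bar0}$ is the $Z$-algebra $(\mathbb F1\oplus\mathbb Fw_1\oplus\mathbb Fw_2\oplus\mathbb Fw_3)\otimes_{\mathbb F}Z$ with $1$ the identity, $w_1^2=w_2^2=1$, $w_3^2=-1$, $w_iw_j=0$ for $i\ne j$. For $f,g\in Z$ and $i,j\in\{1,2,3\}$ the remaining products are: $f(gx)=(fg)x$, $f(gx_j)=(fg)x_j$, $(fw_i)(gx)=(\delta(f)g)x_i$, $(fw_i)(gx_j)=-(fg)x_{i\times j}$, $(fx)(gx)=\delta(f)g-f\delta(g)$, $(fx)(gx_j)=-(fg)w_j$, $(fx_i)(gx)=(fg)w_i$, $(fx_i)(gx_j)=0$, extended by supercommutativity ($ab=(-1)^{|a||b|}ba$), where $x_{1\times2}=-x_{2\times1}=x_3$, $x_{1\times3}=-x_{3\times1}=x_2$, $x_{3\times2}=-x_{2\times3}=x_1$, $x_{i\times i}=0$. $J$ is $\mathbb Z_2^2$-graded by $J^{[\bar0,\bar0]}=Z\oplus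 Zx$, $J^{[\bar1,\bar0]}=Zw_1\oplus Zx_1$, $J^{[\bar0,\bar1]}=Zw_2\oplus Zx_2$, $J^{[\bar1,\bar1]}=Zw_3\oplus Zx_3$. When $-1\in\mathbb F^2$, fix $\sqrt{-1}\in\mathbb F$ and set $v_1=\sqrt{-1}w_1$, $v_2=\sqrt{-1}w_2$, $v_3=w_3$, $y=x$, $y_1=\sqrt{-1}x_1$, $y_2=\sqrt{-1}x_2$, $y_3=x_3$. *)

theory Defs
  imports "HOL-Algebra.Sym_Groups"
begin

text \<open>Indices 1,2,3 and the eight Z-basis elements 1, w1, w2, w3 (even), x, x1, x2, x3 (odd).\<close>

datatype idx3 = I1 | I2 | I3

datatype jb = U | W idx3 | Xo | X idx3

lemma idx3_cases: "y = I1 \<or> y = I2 \<or> y = I3"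
  by (cases y) auto

lemma UNIV_jb: "(UNIV :: jb set) = {U, W I1, W I2, W I3, Xo, X I1, X I2, X I3}"
proof -
  have "x \<in> {U, W I1, W I2, W I3, Xo, X I1, X I2, X I3}" for x
    by (cases x) (use idx3_cases in auto)
  then show ?thesis by blast
qed

instance jb :: finite
  by standard (simp add: UNIV_jb)

text \<open>An element of J is its coordinate vector w.r.t. the Z-basis (J is a free Z-module of rank 8).\<close>
type_synonym 'z jck = "jb \<Rightarrow> 'z"

definition sc :: "jb \<Rightarrow> 'z::comm_ring_1 \<Rightarrow> 'z jck" where
  "sc b f = (\<lambda>c. if c = b then f else 0)"

definition jzero :: "'z::comm_ring_1 jck" where "jzero = (\<lambda>c. 0)"
definition jadd :: "'z::comm_ring_1 jck \<Rightarrow> 'z jck \<Rightarrow> 'z jck" where "jadd a b = (\<lambda>c. a c + b c)"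
definition jneg :: "'z::comm_ring_1 jck \<Rightarrow> 'z jck" where "jneg a = (\<lambda>c. - a c)"
definition jscal :: "'z::comm_ring_1 \<Rightarrow> 'z jck \<Rightarrow> 'z jck" where "jscal z a = (\<lambda>c. z * a c)"

fun wsq :: "idx3 \<Rightarrow> 'z::comm_ring_1" where
  "wsq I1 = 1" | "wsq I2 = 1" | "wsq I3 = -1"

text \<open>cr i j h = h x_{i x j}, with x_{1x2}=-x_{2x1}=x3, x_{1x3}=-x_{3x1}=x2, x_{3x2}=-x_{2x3}=x1, x_{ixi}=0.\<close>
fun cr :: "idx3 \<Rightarrow> idx3 \<Rightarrow> 'z::comm_ring_1 \<Rightarrow> 'z jck" where
  "cr I1 I2 h = sc (X I3) h"
| "cr I2 I1 h = sc (X I3) (- h)"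
| "cr I1 I3 h = sc (X I2) h"
| "cr I3 I1 h = sc (X I2) (- h)"
| "cr I3 I2 h = sc (X I1) h"
| "cr I2 I3 h = sc (X I1) (- h)"
| "cr I1 I1 h = jzero"
| "cr I2 I2 h = jzero"
| "cr I3 I3 h = jzero"

text \<open>bprod d p f q g = (f p)(g q), the product of f*p and g*q for basis elements p, q,
  following the multiplication table (the odd-even cases by supercommutativity).\<close>
fun bprod :: "('z::comm_ring_1 \<Rightarrow> 'z) \<Rightarrow> jb \<Rightarrow> 'z \<Rightarrow> jb \<Rightarrow> 'z \<Rightarrow> 'z jck" where
  "bprod d U f U g = sc U (f * g)"
| "bprod d U f (W j) g = sc (W j) (f * g)"
| "bprod d (W i) f U g = sc (W i) (f * g)"
| "bprod d (W i) f (W j) g = (if i = j then sc U (wsq i * (f * g)) else jzero)"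
| "bprod d U f Xo g = sc Xo (f * g)"
| "bprod d U f (X j) g = sc (X j) (f * g)"
| "bprod d (W i) f Xo g = sc (X i) (d f * g)"
| "bprod d (W i) f (X j) g = jneg (cr i j (f * g))"
| "bprod d Xo f U g = sc Xo (g * f)"
| "bprod d (X j) f U g = sc (X j) (g * f)"
| "bprod d Xo f (W i) g = sc (X i) (d g * f)"
| "bprod d (X j) f (W i) g = jneg (cr i j (g * f))"
| "bprod d Xo f Xo g = sc U (d f * g - f * d g)"
| "bprod d Xo f (X j) g = sc (W j) (- (f * g))"
| "bprod d (X i) f Xo g = sc (W i) (f * g)"
| "bprod d (X i) f (X j) g = jzero"

definition jmult :: "('z::comm_ring_1 \<Rightarrow> 'z) \<Rightarrow> 'z jck \<Rightarrow> 'z jck \<Rightarrow> 'z jck" where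
  "jmult d a b = (\<lambda>c. \<Sum>p\<in>UNIV. \<Sum>q\<in>UNIV. bprod d p (a p) q (b q) c)"

definition jspan :: "jb set \<Rightarrow> ('z::comm_ring_1) jck set" where
  "jspan S = {a. \<forall>c. c \<notin> S \<longrightarrow> a c = 0}"

definition J_even :: "('z::comm_ring_1) jck set" where "J_even = jspan {U, W I1, W I2, W I3}"
definition J_odd :: "('z::comm_ring_1) jck set" where "J_odd = jspan {Xo, X I1, X I2, X I3}"

definition J00 :: "('z::comm_ring_1) jck set" where "J00 = jspan {U, Xo}"
definition J10 :: "('z::comm_ring_1) jck set" where "J10 = jspan {W I1, X I1}"
definition J01 :: "('z::comm_ring_1) jck set" where "J01 = jspan {W I2, X I2}"
definition J11 :: "('z::comm_ring_1) jck set" where "J11 = jspan {W I3, X I3}"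

definition dsum :: "('z::comm_ring_1) jck set \<Rightarrow> 'z jck set \<Rightarrow> 'z jck set" where
  "dsum A B = {jadd a b | a b. a \<in> A \<and> b \<in> B}"

text \<open>F-algebra automorphisms of J (F embedded in Z via iota).\<close>
definition is_aut :: "('f::field \<Rightarrow> 'z::comm_ring_1) \<Rightarrow> ('z \<Rightarrow> 'z) \<Rightarrow> ('z jck \<Rightarrow> 'z jck) \<Rightarrow> bool" where
  "is_aut \<iota> d s \<longleftrightarrow> bij s
     \<and> (\<forall>a b. s (jadd a b) = jadd (s a) (s b))
     \<and> (\<forall>c a. s (jscal (\<iota> c) a) = jscal (\<iota> c) (s a))
     \<and> (\<forall>a b. s (jmult d a b) = jmult d (s a) (s b))"

definition aut_group :: "('f::field \<Rightarrow> 'z::comm_ring_1) \<Rightarrow> ('z \<Rightarrow> 'z) \<Rightarrow> ('z jck \<Rightarrow> 'z jck) monoid" where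
  "aut_group \<iota> d = \<lparr> carrier = {s. is_aut \<iota> d s}, mult = (\<circ>), one = id \<rparr>"

definition even_map :: "('z::comm_ring_1 jck \<Rightarrow> 'z jck) \<Rightarrow> bool" where
  "even_map s \<longleftrightarrow> s ` J_even \<subseteq> J_even \<and> s ` J_odd \<subseteq> J_odd"

definition Z_linear :: "('z::comm_ring_1 jck \<Rightarrow> 'z jck) \<Rightarrow> bool" where
  "Z_linear s \<longleftrightarrow> (\<forall>z a. s (jscal z a) = jscal z (s a)) \<and> (\<forall>a b. s (jadd a b) = jadd (s a) (s b))"

text \<open>The basis 1, v1, v2, v3, y, y1, y2, y3 for a fixed square root i of -1 in F.\<close>
definition jone :: "'z::comm_ring_1 jck" where "jone = sc U 1"
definition vv :: "('f::field \<Rightarrow> 'z::comm_ring_1) \<Rightarrow> 'f \<Rightarrow> idx3 \<Rightarrow> 'z jck" where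
  "vv \<iota> i k = (case k of I1 \<Rightarrow> sc (W I1) (\<iota> i) | I2 \<Rightarrow> sc (W I2) (\<iota> i) | I3 \<Rightarrow> sc (W I3) 1)"
definition yy0 :: "'z::comm_ring_1 jck" where "yy0 = sc Xo 1"
definition yy :: "('f::field \<Rightarrow> 'z::comm_ring_1) \<Rightarrow> 'f \<Rightarrow> idx3 \<Rightarrow> 'z jck" where
  "yy \<iota> i k = (case k of I1 \<Rightarrow> sc (X I1) (\<iota> i) | I2 \<Rightarrow> sc (X I2) (\<iota> i) | I3 \<Rightarrow> sc (X I3) 1)"

fun nxt :: "idx3 \<Rightarrow> idx3" where "nxt I1 = I2" | "nxt I2 = I3" | "nxt I3 = I1"

definition perm_tau1 :: "nat \<Rightarrow> nat" where
  "perm_tau1 n = (if n = 1 then 2 else if n = 2 then 1 else if n = 3 then 4 else if n = 4 then 3 else n)"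
definition perm_tau2 :: "nat \<Rightarrow> nat" where
  "perm_tau2 n = (if n = 2 then 3 else if n = 3 then 2 else if n = 4 then 1 else if n = 1 then 4 else n)"
definition perm_phi :: "nat \<Rightarrow> nat" where
  "perm_phi n = (if n = 1 then 2 else if n = 2 then 3 else if n = 3 then 1 else n)"
definition perm_tau :: "nat \<Rightarrow> nat" where
  "perm_tau n = (if n = 1 then 2 else if n = 2 then 1 else n)"

end

theory Submission
  imports Defs
begin

lemma four_cases: "(a::nat) \<in> {1..4} \<Longrightarrow> a = 1 \<or> a = 2 \<or> a = 3 \<or> a = 4"
  by auto

lemma sum_4: "sum f {1..4::nat} = f 1 + f 2 + f 3 + f 4"
proof -
  have "{1..4::nat} = {1,2,3,4}" by auto
  then show ?thesis by (simp add: add.assoc)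
qed

definition Dv :: "nat \<Rightarrow> idx3 \<Rightarrow> 'a::comm_ring_1" where
  "Dv a j = (if a = 1 then (if j = I1 then 1 else -1)
            else if a = 2 then (if j = I2 then 1 else -1)
            else if a = 3 then (if j = I3 then 1 else -1) else 1)"

definition Sm :: "(nat \<Rightarrow> nat) \<Rightarrow> idx3 \<Rightarrow> idx3 \<Rightarrow> 'a::comm_ring_1" where
  "Sm p j k = (\<Sum>a\<in>{1..4}. Dv (p a) j * Dv a k)"

definition mm :: "(idx3 \<Rightarrow> idx3 \<Rightarrow> 'a::comm_ring_1) \<Rightarrow> (idx3 \<Rightarrow> idx3 \<Rightarrow> 'a) \<Rightarrow> idx3 \<Rightarrow> idx3 \<Rightarrow> 'a" where
  "mm A B j k = A j I1 * B I1 k + A j I2 * B I2 k + A j I3 * B I3 k"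

lemma Dorth: "a \<in> {1..4} \<Longrightarrow> c \<in> {1..4} \<Longrightarrow>
   Dv a I1 * Dv c I1 + Dv a I2 * Dv c I2 + Dv a I3 * Dv c I3 = (if a = c then 4 else 0) - (1::'a::comm_ring_1)"
  by (drule four_cases, drule four_cases) (auto simp: Dv_def)

lemma Dsum: "(\<Sum>a\<in>{1..4}. Dv a j) = (0::'a::comm_ring_1)"
  unfolding sum_4 by (cases j) (simp_all add: Dv_def)

lemma Sm_mult:
  assumes q: "\<And>b. b \<in> {1..4} \<Longrightarrow> q b \<in> {1..4}"
  shows "mm (Sm p) (Sm q) j k = 4 * (Sm (p \<circ> q) j k :: 'a::comm_ring_1)"
proof -
  have "mm (Sm p) (Sm q) j k = (\<Sum>a\<in>{1..4}. \<Sum>b\<in>{1..4}. Dv (p a) j * Dv b k *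
      (Dv a I1 * Dv (q b) I1 + Dv a I2 * Dv (q b) I2 + Dv a I3 * Dv (q b) I3) :: 'a)"
    by (simp add: mm_def Sm_def sum_product sum.distrib[symmetric] algebra_simps)
  also have "\<dots> = (\<Sum>a\<in>{1..4}. \<Sum>b\<in>{1..4}. Dv (p a) j * Dv b k * ((if a = q b then 4 else 0) - 1))"
  proof (intro sum.cong refl)
    fix a b assume a: "a \<in> {1..4::nat}" and b: "b \<in> {1..4::nat}"
    show "Dv (p a) j * Dv b k * (Dv a I1 * Dv (q b) I1 + Dv a I2 * Dv (q b) I2 + Dv a I3 * Dv (q b) I3)
       = Dv (p a) j * Dv b k * ((if a = q b then 4 else 0) - (1::'a))"
      by (subst Dorth[OF a q[OF b]]) (rule refl)
  qed
  also have "\<dots> = (\<Sum>b\<in>{1..4}. \<Sum>a\<in>{1..4}. (if a = q b then 4 * (Dv (p (q b)) j * Dv b k) else 0) - Dv b k * Dv (p a) j)"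
    by (subst sum.swap) (intro sum.cong refl, simp add: algebra_simps)
  also have "\<dots> = (\<Sum>b\<in>{1..4}. 4 * (Dv (p (q b)) j * Dv b k)) - (\<Sum>b\<in>{1..4}. Dv b k) * (\<Sum>a\<in>{1..4}. Dv (p a) j)"
  proof -
    have "(\<Sum>a\<in>{1..4}. (if a = q b then 4 * (Dv (p (q b)) j * Dv b k) else 0) - Dv b k * Dv (p a) j)
       = 4 * (Dv (p (q b)) j * Dv b k) - Dv b k * (\<Sum>a\<in>{1..4}. Dv (p a) j :: 'a)" if b: "b \<in> {1..4}" for b
      using q[OF b] by (simp add: sum_subtractf sum_distrib_left)
    then have "(\<Sum>b\<in>{1..4}. \<Sum>a\<in>{1..4}. (if a = q b then 4 * (Dv (p (q b)) j * Dv b k) else 0) - Dv b k * Dv (p a) j)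
       = (\<Sum>b\<in>{1..4}. 4 * (Dv (p (q b)) j * Dv b k) - Dv b k * (\<Sum>a\<in>{1..4}. Dv (p a) j :: 'a))"
      by (rule sum.cong[OF refl])
    then show ?thesis by (simp only: sum_subtractf sum_distrib_right)
  qed
  also have "\<dots> = 4 * Sm (p \<circ> q) j k"
    unfolding Dsum by (simp add: Sm_def sum_distrib_left)
  finally show ?thesis .
qed

definition Mm :: "(nat \<Rightarrow> nat) \<Rightarrow> idx3 \<Rightarrow> idx3 \<Rightarrow> 'f::field" where
  "Mm p j k = of_int (sign p) * Sm p j k / 4"

lemma four_ne: "(2::'f::field) \<noteq> 0 \<Longrightarrow> (4::'f) \<noteq> 0"
proof -
  assume "(2::'f) \<noteq> 0"
  moreover have "(4::'f) = 2 * 2" by simp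
  ultimately show ?thesis by (metis mult_eq_0_iff)
qed

lemma perm4_in: "p permutes {1..4::nat} \<Longrightarrow> b \<in> {1..4} \<Longrightarrow> p b \<in> {1..4}"
  by (metis permutes_in_image)

lemma perm4_perm: "p permutes {1..4::nat} \<Longrightarrow> permutation p"
  by (rule permutes_imp_permutation) auto

lemma Mm_mult:
  assumes two: "(2::'f::field) \<noteq> 0" and p: "p permutes {1..4}" and q: "q permutes {1..4}"
  shows "mm (Mm p) (Mm q) j k = (Mm (p \<circ> q) j k :: 'f)"
proof -
  have four: "(4::'f) \<noteq> 0" using four_ne[OF two] .
  have "(16::'f) = 4 * 4" by simp
  then have sixteen: "(16::'f) \<noteq> 0" using four by (metis mult_eq_0_iff)
  have sg: "sign (p \<circ> q) = sign p * sign q" using sign_compose perm4_perm p q by blast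
  have "mm (Mm p) (Mm q) j k = of_int (sign p) * of_int (sign q) * mm (Sm p) (Sm q) j k / (16::'f)"
    unfolding mm_def Mm_def using four by (simp add: field_simps)
  also have "\<dots> = of_int (sign p) * of_int (sign q) * (4 * Sm (p \<circ> q) j k) / (16::'f)"
  proof -
    have "mm (Sm p) (Sm q) j k = (4::'f) * Sm (p \<circ> q) j k"
      by (rule Sm_mult) (rule perm4_in[OF q])
    then show ?thesis by simp
  qed
  also have "\<dots> = Mm (p \<circ> q) j k"
    unfolding Mm_def sg using four sixteen by (simp add: field_simps)
  finally show ?thesis .
qed

definition alpha :: "'f::field \<Rightarrow> idx3 \<Rightarrow> 'f" where "alpha i j = (if j = I3 then 1 else i)"
definition alphainv :: "'f::field \<Rightarrow> idx3 \<Rightarrow> 'f" where "alphainv i j = (if j = I3 then 1 else - i)"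

lemma alpha_inv1: "i * i = -1 \<Longrightarrow> alphainv i j * alpha i j = 1"
  by (simp add: alpha_def alphainv_def)
lemma alpha_inv2: "i * i = -1 \<Longrightarrow> alpha i j * alphainv i j = 1"
  by (simp add: alpha_def alphainv_def)

definition NN :: "'f::field \<Rightarrow> (nat \<Rightarrow> nat) \<Rightarrow> idx3 \<Rightarrow> idx3 \<Rightarrow> 'f" where
  "NN i p j k = alpha i j * Mm p j k * alphainv i k"

lemma NN_mult:
  assumes two: "(2::'f::field) \<noteq> 0" and ii: "i * i = (-1::'f)"
    and p: "p permutes {1..4}" and q: "q permutes {1..4}"
  shows "mm (NN i p) (NN i q) j k = NN i (p \<circ> q) j k"
proof -
  have "mm (NN i p) (NN i q) j k = alpha i j * (Mm p j I1 * (alphainv i I1 * alpha i I1) * Mm q I1 k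
     + Mm p j I2 * (alphainv i I2 * alpha i I2) * Mm q I2 k + Mm p j I3 * (alphainv i I3 * alpha i I3) * Mm q I3 k) * alphainv i k"
    by (simp add: mm_def NN_def algebra_simps)
  also have "\<dots> = alpha i j * mm (Mm p) (Mm q) j k * alphainv i k"
    by (simp add: alpha_inv1[OF ii] mm_def)
  also have "\<dots> = NN i (p \<circ> q) j k"
    by (simp add: Mm_mult[OF two p q] NN_def)
  finally show ?thesis .
qed

lemma Sm_id: "Sm id j k = (if j = k then 4 else (0::'a::comm_ring_1))"
  unfolding Sm_def sum_4 by (cases j; cases k) (simp_all add: Dv_def)

lemma NN_id:
  assumes two: "(2::'f::field) \<noteq> 0" and ii: "i * i = (-1::'f)"
  shows "NN i id j k = (if j = k then 1 else 0)"
  by (cases "j = k") (simp_all add: NN_def Mm_def Sm_id alpha_inv2[OF ii] four_ne[OF two])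

lemma jb_cases: "c = U \<or> c = W I1 \<or> c = W I2 \<or> c = W I3 \<or> c = Xo \<or> c = X I1 \<or> c = X I2 \<or> c = X I3"
  using UNIV_jb by blast

lemma sumjb: "(\<Sum>p\<in>(UNIV::jb set). f p) = f U + f (W I1) + f (W I2) + f (W I3) + f Xo + f (X I1) + f (X I2) + f (X I3)"
  by (simp add: UNIV_jb add.assoc)

definition rhoZ :: "(idx3 \<Rightarrow> idx3 \<Rightarrow> 'z::comm_ring_1) \<Rightarrow> 'z jck \<Rightarrow> 'z jck" where
 "rhoZ A a = (\<lambda>c. case c of U \<Rightarrow> a U | Xo \<Rightarrow> a Xo
    | W j \<Rightarrow> A j I1 * a (W I1) + A j I2 * a (W I2) + A j I3 * a (W I3)
    | X j \<Rightarrow> A j I1 * a (X I1) + A j I2 * a (X I2) + A j I3 * a (X I3))"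

lemma rhoZ_comp:
  assumes iota_add: "\<And>a b. \<iota> (a + b) = \<iota> a + \<iota> b"
    and iota_mult: "\<And>a b. \<iota> (a * b) = \<iota> a * \<iota> b"
  shows "rhoZ (\<lambda>j k. \<iota> (A j k)) (rhoZ (\<lambda>j k. \<iota> (B j k)) a) = rhoZ (\<lambda>j k. (\<iota> (mm A B j k) :: 'z::comm_ring_1)) a"
proof
  fix c show "rhoZ (\<lambda>j k. \<iota> (A j k)) (rhoZ (\<lambda>j k. \<iota> (B j k)) a) c = rhoZ (\<lambda>j k. \<iota> (mm A B j k)) a c"
    using jb_cases[of c] apply (elim disjE)
    by (simp_all add: rhoZ_def mm_def iota_add iota_mult algebra_simps)
qed
definition T12 :: "'a::comm_ring_1 \<Rightarrow> idx3 \<Rightarrow> idx3 \<Rightarrow> 'a" where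
  "T12 ii = (\<lambda>j k. case (j,k) of (I1,I2) \<Rightarrow> -1 | (I2,I1) \<Rightarrow> -1 | (I3,I3) \<Rightarrow> -1 | _ \<Rightarrow> 0)"

definition T13 :: "'a::comm_ring_1 \<Rightarrow> idx3 \<Rightarrow> idx3 \<Rightarrow> 'a" where
  "T13 ii = (\<lambda>j k. case (j,k) of (I1,I3) \<Rightarrow> -ii | (I2,I2) \<Rightarrow> -1 | (I3,I1) \<Rightarrow> ii | _ \<Rightarrow> 0)"

definition T14 :: "'a::comm_ring_1 \<Rightarrow> idx3 \<Rightarrow> idx3 \<Rightarrow> 'a" where
  "T14 ii = (\<lambda>j k. case (j,k) of (I1,I1) \<Rightarrow> -1 | (I2,I3) \<Rightarrow> ii | (I3,I2) \<Rightarrow> -ii | _ \<Rightarrow> 0)"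

definition T23 :: "'a::comm_ring_1 \<Rightarrow> idx3 \<Rightarrow> idx3 \<Rightarrow> 'a" where
  "T23 ii = (\<lambda>j k. case (j,k) of (I1,I1) \<Rightarrow> -1 | (I2,I3) \<Rightarrow> -ii | (I3,I2) \<Rightarrow> ii | _ \<Rightarrow> 0)"

definition T24 :: "'a::comm_ring_1 \<Rightarrow> idx3 \<Rightarrow> idx3 \<Rightarrow> 'a" where
  "T24 ii = (\<lambda>j k. case (j,k) of (I1,I3) \<Rightarrow> ii | (I2,I2) \<Rightarrow> -1 | (I3,I1) \<Rightarrow> -ii | _ \<Rightarrow> 0)"

definition T34 :: "'a::comm_ring_1 \<Rightarrow> idx3 \<Rightarrow> idx3 \<Rightarrow> 'a" where
  "T34 ii = (\<lambda>j k. case (j,k) of (I1,I2) \<Rightarrow> 1 | (I2,I1) \<Rightarrow> 1 | (I3,I3) \<Rightarrow> -1 | _ \<Rightarrow> 0)"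

definition Tt1 :: "'a::comm_ring_1 \<Rightarrow> idx3 \<Rightarrow> idx3 \<Rightarrow> 'a" where
  "Tt1 ii = (\<lambda>j k. case (j,k) of (I1,I1) \<Rightarrow> -1 | (I2,I2) \<Rightarrow> -1 | (I3,I3) \<Rightarrow> 1 | _ \<Rightarrow> 0)"

definition Tt2 :: "'a::comm_ring_1 \<Rightarrow> idx3 \<Rightarrow> idx3 \<Rightarrow> 'a" where
  "Tt2 ii = (\<lambda>j k. case (j,k) of (I1,I1) \<Rightarrow> 1 | (I2,I2) \<Rightarrow> -1 | (I3,I3) \<Rightarrow> -1 | _ \<Rightarrow> 0)"

definition Tphi :: "'a::comm_ring_1 \<Rightarrow> idx3 \<Rightarrow> idx3 \<Rightarrow> 'a" where
  "Tphi ii = (\<lambda>j k. case (j,k) of (I2,I1) \<Rightarrow> 1 | (I3,I2) \<Rightarrow> -ii | (I1,I3) \<Rightarrow> ii | _ \<Rightarrow> 0)"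

lemmas Tdefs = T12_def T13_def T14_def T23_def T24_def T34_def Tt1_def Tt2_def Tphi_def

definition rho :: "('f::field \<Rightarrow> 'z::comm_ring_1) \<Rightarrow> 'f \<Rightarrow> (nat \<Rightarrow> nat) \<Rightarrow> 'z jck \<Rightarrow> 'z jck" where
  "rho \<iota> i p = rhoZ (\<lambda>j k. \<iota> (NN i p j k))"

lemma NN_t12:
  assumes two: "(2::'f::field) \<noteq> 0" and ii: "i * i = (-1::'f)"
  shows "NN i (Transposition.transpose 1 2) = T12 i"
proof (intro ext)
  fix j k show "NN i (Transposition.transpose 1 2) j k = T12 i j k"
    unfolding NN_def Mm_def Sm_def sum_4 using four_ne[OF two] ii
    by (cases j; cases k) (simp_all add: sign_swap_id Dv_def alpha_def alphainv_def Tdefs transpose_def)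
qed

lemma NN_t13:
  assumes two: "(2::'f::field) \<noteq> 0" and ii: "i * i = (-1::'f)"
  shows "NN i (Transposition.transpose 1 3) = T13 i"
proof (intro ext)
  fix j k show "NN i (Transposition.transpose 1 3) j k = T13 i j k"
    unfolding NN_def Mm_def Sm_def sum_4 using four_ne[OF two] ii
    by (cases j; cases k) (simp_all add: sign_swap_id Dv_def alpha_def alphainv_def Tdefs transpose_def)
qed

lemma NN_t14:
  assumes two: "(2::'f::field) \<noteq> 0" and ii: "i * i = (-1::'f)"
  shows "NN i (Transposition.transpose 1 4) = T14 i"
proof (intro ext)
  fix j k show "NN i (Transposition.transpose 1 4) j k = T14 i j k"
    unfolding NN_def Mm_def Sm_def sum_4 using four_ne[OF two] ii
    by (cases j; cases k) (simp_all add: sign_swap_id Dv_def alpha_def alphainv_def Tdefs transpose_def)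
qed

lemma NN_t23:
  assumes two: "(2::'f::field) \<noteq> 0" and ii: "i * i = (-1::'f)"
  shows "NN i (Transposition.transpose 2 3) = T23 i"
proof (intro ext)
  fix j k show "NN i (Transposition.transpose 2 3) j k = T23 i j k"
    unfolding NN_def Mm_def Sm_def sum_4 using four_ne[OF two] ii
    by (cases j; cases k) (simp_all add: sign_swap_id Dv_def alpha_def alphainv_def Tdefs transpose_def)
qed

lemma NN_t24:
  assumes two: "(2::'f::field) \<noteq> 0" and ii: "i * i = (-1::'f)"
  shows "NN i (Transposition.transpose 2 4) = T24 i"
proof (intro ext)
  fix j k show "NN i (Transposition.transpose 2 4) j k = T24 i j k"
    unfolding NN_def Mm_def Sm_def sum_4 using four_ne[OF two] ii
    by (cases j; cases k) (simp_all add: sign_swap_id Dv_def alpha_def alphainv_def Tdefs transpose_def)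
qed

lemma NN_t34:
  assumes two: "(2::'f::field) \<noteq> 0" and ii: "i * i = (-1::'f)"
  shows "NN i (Transposition.transpose 3 4) = T34 i"
proof (intro ext)
  fix j k show "NN i (Transposition.transpose 3 4) j k = T34 i j k"
    unfolding NN_def Mm_def Sm_def sum_4 using four_ne[OF two] ii
    by (cases j; cases k) (simp_all add: sign_swap_id Dv_def alpha_def alphainv_def Tdefs transpose_def)
qed


lemma rhoZ_add: "rhoZ A (jadd a b) = jadd (rhoZ A a) (rhoZ A b)"
proof
  fix c show "rhoZ A (jadd a b) c = jadd (rhoZ A a) (rhoZ A b) c"
    using jb_cases[of c] by (elim disjE) (simp_all add: rhoZ_def jadd_def algebra_simps)
qed

lemma rhoZ_scal: "rhoZ A (jscal z a) = jscal z (rhoZ A a)"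
proof
  fix c show "rhoZ A (jscal z a) c = jscal z (rhoZ A a) c"
    using jb_cases[of c] by (elim disjE) (simp_all add: rhoZ_def jscal_def algebra_simps)
qed

lemma rhoZ_neg: "rhoZ A (jneg a) = jneg (rhoZ A a)"
proof
  fix c show "rhoZ A (jneg a) c = jneg (rhoZ A a) c"
    using jb_cases[of c] by (elim disjE) (simp_all add: rhoZ_def jneg_def algebra_simps)
qed

lemma rhoZ_even: "even_map (rhoZ A)"
  unfolding even_map_def J_even_def J_odd_def jspan_def
proof (intro conjI subsetI)
  fix x assume "x \<in> rhoZ A ` {a. \<forall>c. c \<notin> {U, W I1, W I2, W I3} \<longrightarrow> a c = 0}"
  then obtain a where a: "\<forall>c. c \<notin> {U, W I1, W I2, W I3} \<longrightarrow> a c = 0" and x: "x = rhoZ A a" by blast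
  show "x \<in> {a. \<forall>c. c \<notin> {U, W I1, W I2, W I3} \<longrightarrow> a c = 0}"
  proof (intro CollectI allI impI)
    fix c assume "c \<notin> {U, W I1, W I2, W I3}"
    then show "x c = 0" using jb_cases[of c] a unfolding x by (auto simp: rhoZ_def)
  qed
next
  fix x assume "x \<in> rhoZ A ` {a. \<forall>c. c \<notin> {Xo, X I1, X I2, X I3} \<longrightarrow> a c = 0}"
  then obtain a where a: "\<forall>c. c \<notin> {Xo, X I1, X I2, X I3} \<longrightarrow> a c = 0" and x: "x = rhoZ A a" by blast
  show "x \<in> {a. \<forall>c. c \<notin> {Xo, X I1, X I2, X I3} \<longrightarrow> a c = 0}"
  proof (intro CollectI allI impI)
    fix c assume "c \<notin> {Xo, X I1, X I2, X I3}"
    then show "x c = 0" using jb_cases[of c] a unfolding x by (auto simp: rhoZ_def)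
  qed
qed

lemma rhoZ_Zlin: "Z_linear (rhoZ A)"
  unfolding Z_linear_def by (simp add: rhoZ_add rhoZ_scal)

lemma rhoZ_mult:
  fixes d :: "'z::comm_ring_1 \<Rightarrow> 'z"
  assumes d_add: "\<And>f g. d (f + g) = d f + d g"
   and d_ii: "\<And>f. d (ii * f) = ii * d f"
   and iisq: "ii * ii = -1"
   and A: "A = T12 ii \<or> A = T13 ii \<or> A = T14 ii \<or> A = T23 ii \<or> A = T24 ii \<or> A = T34 ii"
  shows "jmult d (rhoZ A a) (rhoZ A b) = rhoZ A (jmult d a b)"
proof -
  have d0: "d 0 = 0" using d_add[of 0 0] by simp
  have dneg: "d (- f) = - d f" for f using d_add[of f "-f"] d0 by (simp add: eq_neg_iff_add_eq_0 add.commute)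
  have ii2: "ii * (ii * f) = - f" for f using iisq by (metis mult.assoc mult_minus1)
  show ?thesis
  proof
    fix c show "jmult d (rhoZ A a) (rhoZ A b) c = rhoZ A (jmult d a b) c"
      using jb_cases[of c] A apply (elim disjE)
      by (simp_all add: jmult_def sumjb sc_def jneg_def jzero_def rhoZ_def Tdefs d_add d_ii d0 dneg algebra_simps iisq ii2)
  qed
qed

lemma rhoZ_apply_W: "rhoZ A (sc (W k) 1) (W j) = A j k"
  by (cases j; cases k) (simp_all add: rhoZ_def sc_def)

lemma Svec:
  assumes p: "p permutes {1..4}" and b: "b \<in> {1..4}"
  shows "Sm p j I1 * Dv b I1 + Sm p j I2 * Dv b I2 + Sm p j I3 * Dv b I3 = 4 * (Dv (p b) j :: 'a::comm_ring_1)"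
proof -
  have "Sm p j I1 * Dv b I1 + Sm p j I2 * Dv b I2 + Sm p j I3 * Dv b I3
      = (\<Sum>a\<in>{1..4}. Dv (p a) j * (Dv a I1 * Dv b I1 + Dv a I2 * Dv b I2 + Dv a I3 * Dv b I3) :: 'a)"
  proof -
    have "Sm p j I1 * Dv b I1 + Sm p j I2 * Dv b I2 + Sm p j I3 * Dv b I3
      = (\<Sum>a\<in>{1..4}. Dv (p a) j * Dv a I1 * Dv b I1 + Dv (p a) j * Dv a I2 * Dv b I2 + Dv (p a) j * Dv a I3 * Dv b I3 :: 'a)"
      by (simp only: Sm_def sum.distrib sum_distrib_right)
    also have "\<dots> = (\<Sum>a\<in>{1..4}. Dv (p a) j * (Dv a I1 * Dv b I1 + Dv a I2 * Dv b I2 + Dv a I3 * Dv b I3) :: 'a)"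
      by (intro sum.cong refl) (simp add: algebra_simps)
    finally show ?thesis .
  qed
  also have "\<dots> = (\<Sum>a\<in>{1..4}. (if a = b then 4 * Dv (p b) j else 0) - Dv (p a) j)"
  proof (intro sum.cong refl)
    fix a assume a: "a \<in> {1..4::nat}"
    show "Dv (p a) j * (Dv a I1 * Dv b I1 + Dv a I2 * Dv b I2 + Dv a I3 * Dv b I3)
       = (if a = b then 4 * Dv (p b) j else 0) - (Dv (p a) j :: 'a)"
      by (subst Dorth[OF a b]) (simp add: algebra_simps)
  qed
  also have "\<dots> = 4 * Dv (p b) j - (\<Sum>a\<in>{1..4}. Dv (p a) j)"
    using b by (simp add: sum_subtractf)
  also have "(\<Sum>a\<in>{1..4}. Dv (p a) j) = (\<Sum>a\<in>{1..4}. Dv a j :: 'a)"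
    using sum.permute[OF p, of "\<lambda>a. Dv a j", symmetric] by (simp add: comp_def)
  finally show ?thesis unfolding Dsum by simp
qed

lemma one_neq_m1: "(2::'f::field) \<noteq> 0 \<Longrightarrow> (1::'f) \<noteq> -1"
proof
  assume "(2::'f) \<noteq> 0" "(1::'f) = -1"
  then have "(2::'f) = 1 + -1" by (metis one_add_one)
  then show False using \<open>(2::'f) \<noteq> 0\<close> by simp
qed

lemma Dinj:
  assumes two: "(2::'f::field) \<noteq> 0" and x: "x \<in> {1..4}" and y: "y \<in> {1..4}"
    and s: "s = 1 \<or> s = -1" and t: "t = 1 \<or> t = -1"
    and h: "\<And>j. (of_int s :: 'f) * Dv x j = of_int t * Dv y j"
  shows "x = y"
proof -
  have n1: "(1::'f) \<noteq> -1" and n2: "(-1::'f) \<noteq> 1" using one_neq_m1[OF two] by auto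
  show ?thesis
    using four_cases[OF x] four_cases[OF y] s t h[of I1] h[of I2] h[of I3] n1 n2
    by (elim disjE) (simp_all add: Dv_def)
qed

locale ck =
  fixes \<iota> :: "'f::field \<Rightarrow> 'z::comm_ring_1" and d :: "'z \<Rightarrow> 'z" and i :: 'f
  assumes two: "(2::'f) \<noteq> 0"
    and iota_add: "\<And>a b. \<iota> (a + b) = \<iota> a + \<iota> b"
    and iota_mult: "\<And>a b. \<iota> (a * b) = \<iota> a * \<iota> b"
    and iota_one: "\<iota> 1 = 1"
    and d_add: "\<And>f g. d (f + g) = d f + d g"
    and d_scal: "\<And>c f. d (\<iota> c * f) = \<iota> c * d f"
    and ii: "i * i = -1"
begin

lemma iota0: "\<iota> 0 = 0" using iota_add[of 0 0] by simp

lemma iota_neg: "\<iota> (- x) = - \<iota> x"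
  using iota_add[of x "-x"] iota0 by (simp add: eq_neg_iff_add_eq_0 add.commute)

lemma iota_inj: "\<iota> x = \<iota> y \<Longrightarrow> x = y"
proof (rule ccontr)
  assume h: "\<iota> x = \<iota> y" "x \<noteq> y"
  have "\<iota> x = \<iota> (x - y) + \<iota> y" by (metis iota_add diff_add_cancel)
  then have z: "\<iota> (x - y) = 0" using h by simp
  have "(1::'z) = \<iota> ((x - y) * inverse (x - y))" using h(2) iota_one by simp
  also have "\<dots> = 0" by (simp add: iota_mult z)
  finally show False by simp
qed

lemma iisq: "\<iota> i * \<iota> i = -1"
  by (metis iota_mult ii iota_neg iota_one)

lemma iota_T12: "(\<lambda>j k. \<iota> (T12 i j k)) = T12 (\<iota> i)"
proof (intro ext)
  fix j k show "\<iota> (T12 i j k) = T12 (\<iota> i) j k"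
    by (cases j; cases k) (simp_all add: Tdefs iota0 iota_one iota_neg)
qed

lemma iota_T13: "(\<lambda>j k. \<iota> (T13 i j k)) = T13 (\<iota> i)"
proof (intro ext)
  fix j k show "\<iota> (T13 i j k) = T13 (\<iota> i) j k"
    by (cases j; cases k) (simp_all add: Tdefs iota0 iota_one iota_neg)
qed

lemma iota_T14: "(\<lambda>j k. \<iota> (T14 i j k)) = T14 (\<iota> i)"
proof (intro ext)
  fix j k show "\<iota> (T14 i j k) = T14 (\<iota> i) j k"
    by (cases j; cases k) (simp_all add: Tdefs iota0 iota_one iota_neg)
qed

lemma iota_T23: "(\<lambda>j k. \<iota> (T23 i j k)) = T23 (\<iota> i)"
proof (intro ext)
  fix j k show "\<iota> (T23 i j k) = T23 (\<iota> i) j k"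
    by (cases j; cases k) (simp_all add: Tdefs iota0 iota_one iota_neg)
qed

lemma iota_T24: "(\<lambda>j k. \<iota> (T24 i j k)) = T24 (\<iota> i)"
proof (intro ext)
  fix j k show "\<iota> (T24 i j k) = T24 (\<iota> i) j k"
    by (cases j; cases k) (simp_all add: Tdefs iota0 iota_one iota_neg)
qed

lemma iota_T34: "(\<lambda>j k. \<iota> (T34 i j k)) = T34 (\<iota> i)"
proof (intro ext)
  fix j k show "\<iota> (T34 i j k) = T34 (\<iota> i) j k"
    by (cases j; cases k) (simp_all add: Tdefs iota0 iota_one iota_neg)
qed

lemma iota_Tt1: "(\<lambda>j k. \<iota> (Tt1 i j k)) = Tt1 (\<iota> i)"
proof (intro ext)
  fix j k show "\<iota> (Tt1 i j k) = Tt1 (\<iota> i) j k"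
    by (cases j; cases k) (simp_all add: Tdefs iota0 iota_one iota_neg)
qed

lemma iota_Tt2: "(\<lambda>j k. \<iota> (Tt2 i j k)) = Tt2 (\<iota> i)"
proof (intro ext)
  fix j k show "\<iota> (Tt2 i j k) = Tt2 (\<iota> i) j k"
    by (cases j; cases k) (simp_all add: Tdefs iota0 iota_one iota_neg)
qed

lemma iota_Tphi: "(\<lambda>j k. \<iota> (Tphi i j k)) = Tphi (\<iota> i)"
proof (intro ext)
  fix j k show "\<iota> (Tphi i j k) = Tphi (\<iota> i) j k"
    by (cases j; cases k) (simp_all add: Tdefs iota0 iota_one iota_neg)
qed


lemma rho_comp:
  assumes p: "p permutes {1..4}" and q: "q permutes {1..4}"
  shows "rho \<iota> i (p \<circ> q) = rho \<iota> i p \<circ> rho \<iota> i q"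
proof
  fix a
  have "(\<lambda>j k. \<iota> (mm (NN i p) (NN i q) j k)) = (\<lambda>j k. \<iota> (NN i (p \<circ> q) j k))"
    by (simp add: NN_mult[OF two ii p q])
  then show "rho \<iota> i (p \<circ> q) a = (rho \<iota> i p \<circ> rho \<iota> i q) a"
    unfolding rho_def comp_def rhoZ_comp[of \<iota>, OF iota_add iota_mult] by simp
qed

lemma rho_id: "rho \<iota> i id = id"
proof
  fix a show "rho \<iota> i id a = id a"
  proof
    fix c show "rho \<iota> i id a c = id a c"
      using jb_cases[of c] by (elim disjE) (simp_all add: rho_def rhoZ_def NN_id[OF two ii] iota0 iota_one)
  qed
qed

lemma NN_comp: "p permutes {1..4} \<Longrightarrow> q permutes {1..4} \<Longrightarrow> NN i (p \<circ> q) = mm (NN i p) (NN i q)"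
  by (intro ext) (simp add: NN_mult[OF two ii])

lemma rho_t12: "rho \<iota> i (Transposition.transpose 1 2) = rhoZ (T12 (\<iota> i))"
  unfolding rho_def NN_t12[OF two ii] iota_T12 ..

lemma rho_t13: "rho \<iota> i (Transposition.transpose 1 3) = rhoZ (T13 (\<iota> i))"
  unfolding rho_def NN_t13[OF two ii] iota_T13 ..

lemma rho_t14: "rho \<iota> i (Transposition.transpose 1 4) = rhoZ (T14 (\<iota> i))"
  unfolding rho_def NN_t14[OF two ii] iota_T14 ..

lemma rho_t23: "rho \<iota> i (Transposition.transpose 2 3) = rhoZ (T23 (\<iota> i))"
  unfolding rho_def NN_t23[OF two ii] iota_T23 ..

lemma rho_t24: "rho \<iota> i (Transposition.transpose 2 4) = rhoZ (T24 (\<iota> i))"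
  unfolding rho_def NN_t24[OF two ii] iota_T24 ..

lemma rho_t34: "rho \<iota> i (Transposition.transpose 3 4) = rhoZ (T34 (\<iota> i))"
  unfolding rho_def NN_t34[OF two ii] iota_T34 ..

lemma rho_t:
  assumes a: "a \<in> {1..4}" and b: "b \<in> {1..4}" and ab: "a \<noteq> b"
  shows "\<exists>A. rho \<iota> i (Transposition.transpose a b) = rhoZ A \<and>
     (A = T12 (\<iota> i) \<or> A = T13 (\<iota> i) \<or> A = T14 (\<iota> i) \<or> A = T23 (\<iota> i) \<or> A = T24 (\<iota> i) \<or> A = T34 (\<iota> i))"
  using four_cases[OF a] four_cases[OF b] ab
  apply (elim disjE)
  apply (simp_all only: rho_t12 rho_t13 rho_t14 rho_t23 rho_t24 rho_t34
     transpose_commute[of 2 1] transpose_commute[of 3 1] transpose_commute[of 4 1]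
     transpose_commute[of 3 2] transpose_commute[of 4 2] transpose_commute[of 4 3])
  apply blast+
  done

lemma is_aut_comp: "is_aut \<iota> d s \<Longrightarrow> is_aut \<iota> d t \<Longrightarrow> is_aut \<iota> d (s \<circ> t)"
  unfolding is_aut_def by (auto intro: bij_comp)

lemma is_aut_id: "is_aut \<iota> d id"
  unfolding is_aut_def by simp

lemma aut_t:
  assumes a: "a \<in> {1..4}" and b: "b \<in> {1..4}" and ab: "a \<noteq> b"
  shows "is_aut \<iota> d (rho \<iota> i (Transposition.transpose a b))"
proof -
  obtain A where A: "rho \<iota> i (Transposition.transpose a b) = rhoZ A"
    and At: "A = T12 (\<iota> i) \<or> A = T13 (\<iota> i) \<or> A = T14 (\<iota> i) \<or> A = T23 (\<iota> i) \<or> A = T24 (\<iota> i) \<or> A = T34 (\<iota> i)"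
    using rho_t[OF a b ab] by blast
  have tp: "Transposition.transpose a b permutes {1..4}" by (rule permutes_swap_id[OF a b])
  have "rho \<iota> i (Transposition.transpose a b) \<circ> rho \<iota> i (Transposition.transpose a b) = id"
    using rho_comp[OF tp tp] rho_id by simp
  then have bij: "bij (rho \<iota> i (Transposition.transpose a b))"
    using o_bij by blast
  have dii: "d (\<iota> i * f) = \<iota> i * d f" for f by (rule d_scal)
  show ?thesis
    unfolding is_aut_def using bij
    by (simp add: A rhoZ_add rhoZ_scal rhoZ_mult[OF d_add dii iisq At])
qed

lemma aut_rho: assumes p: "p permutes {1..4}" shows "is_aut \<iota> d (rho \<iota> i p)"
  using p finite_atLeastAtMost[of "1::nat" 4]
proof (induction rule: permutes_induct)
  case id
  then show ?case using rho_id is_aut_id unfolding id_def by simp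
next
  case (swap a b p)
  have "rho \<iota> i (Transposition.transpose a b \<circ> p) = rho \<iota> i (Transposition.transpose a b) \<circ> rho \<iota> i p"
    by (rule rho_comp[OF permutes_swap_id[OF swap(1,2)] \<open>p permutes {1..4}\<close>])
  then show ?case using is_aut_comp[OF aut_t[OF swap(1-3)] \<open>is_aut \<iota> d (rho \<iota> i p)\<close>] by (simp only:)
qed

lemma rho_inj:
  assumes p: "p permutes {1..4}" and q: "q permutes {1..4}" and e: "rho \<iota> i p = rho \<iota> i q"
  shows "p = q"
proof -
  have N: "NN i p j k = NN i q j k" for j k
  proof -
    have "rho \<iota> i p (sc (W k) 1) (W j) = rho \<iota> i q (sc (W k) 1) (W j)" using e by simp
    then show ?thesis unfolding rho_def rhoZ_apply_W by (rule iota_inj)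
  qed
  have M: "Mm p j k = (Mm q j k :: 'f)" for j k
  proof -
    have e: "alphainv i j * NN i r j k * alpha i k = (alphainv i j * alpha i j) * Mm r j k * (alphainv i k * alpha i k)" for r
      unfolding NN_def by (simp add: mult_ac)
    have "Mm p j k = alphainv i j * NN i p j k * alpha i k"
      unfolding e by (simp add: alpha_inv1[OF ii])
    also have "\<dots> = alphainv i j * NN i q j k * alpha i k" by (simp add: N)
    also have "\<dots> = Mm q j k"
      unfolding e by (simp add: alpha_inv1[OF ii])
    finally show ?thesis .
  qed
  have four: "(4::'f) \<noteq> 0" by (rule four_ne[OF two])
  have V: "Mm r j I1 * Dv b I1 + Mm r j I2 * Dv b I2 + Mm r j I3 * Dv b I3 = (of_int (sign r) :: 'f) * Dv (r b) j"
    if r: "r permutes {1..4}" and b: "b \<in> {1..4}" for r b j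
  proof -
    have "Mm r j I1 * Dv b I1 + Mm r j I2 * Dv b I2 + Mm r j I3 * Dv b I3
        = of_int (sign r) * (Sm r j I1 * Dv b I1 + Sm r j I2 * Dv b I2 + Sm r j I3 * Dv b I3) / (4::'f)"
      unfolding Mm_def by (simp add: field_simps)
    also have "\<dots> = of_int (sign r) * Dv (r b) j"
      unfolding Svec[OF r b] using four by simp
    finally show ?thesis .
  qed
  have sg: "sign r = 1 \<or> sign r = -1" for r :: "nat \<Rightarrow> nat" by (simp add: sign_def)
  show ?thesis
  proof
    fix n show "p n = q n"
    proof (cases "n \<in> {1..4}")
      case True
      have "(of_int (sign p) :: 'f) * Dv (p n) j = of_int (sign q) * Dv (q n) j" for j
        using V[OF p True, of j] V[OF q True, of j] M by simp
      then show ?thesis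
        by (rule Dinj[OF two perm4_in[OF p True] perm4_in[OF q True] sg sg])
    next
      case False
      then show ?thesis using permutes_not_in[OF p] permutes_not_in[OF q] by simp
    qed
  qed
qed


lemma pt1: "perm_tau1 = Transposition.transpose 1 2 \<circ> Transposition.transpose 3 4"
  by (rule ext) (simp add: perm_tau1_def transpose_def)
lemma pt2: "perm_tau2 = Transposition.transpose 2 3 \<circ> Transposition.transpose 1 4"
  by (rule ext) (simp add: perm_tau2_def transpose_def)
lemma pphi: "perm_phi = Transposition.transpose 1 2 \<circ> Transposition.transpose 2 3"
  by (rule ext) (simp add: perm_phi_def transpose_def)
lemma ptau: "perm_tau = Transposition.transpose 1 2"
  by (rule ext) (simp add: perm_tau_def transpose_def)

lemma tp: "x \<in> {1..4} \<Longrightarrow> y \<in> {1..4} \<Longrightarrow> Transposition.transpose x y permutes {1..4::nat}"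
  by (rule permutes_swap_id)

lemma NN_tau1: "NN i perm_tau1 = Tt1 i"
proof -
  have "NN i perm_tau1 = mm (T12 i) (T34 i)"
  proof -
    have "NN i (Transposition.transpose 1 2 \<circ> Transposition.transpose 3 4) = mm (NN i (Transposition.transpose 1 2)) (NN i (Transposition.transpose 3 4))"
      by (rule NN_comp; rule tp; simp)
    then show ?thesis unfolding pt1 NN_t12[OF two ii] NN_t34[OF two ii] .
  qed
  also have "\<dots> = Tt1 i"
    by (intro ext, rename_tac j k, case_tac j; case_tac k) (simp_all add: mm_def Tdefs)
  finally show ?thesis .
qed

lemma NN_tau2: "NN i perm_tau2 = Tt2 i"
proof -
  have "NN i perm_tau2 = mm (T23 i) (T14 i)"
  proof -
    have "NN i (Transposition.transpose 2 3 \<circ> Transposition.transpose 1 4) = mm (NN i (Transposition.transpose 2 3)) (NN i (Transposition.transpose 1 4))"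
      by (rule NN_comp; rule tp; simp)
    then show ?thesis unfolding pt2 NN_t23[OF two ii] NN_t14[OF two ii] .
  qed
  also have "\<dots> = Tt2 i"
    by (intro ext, rename_tac j k, case_tac j; case_tac k) (simp_all add: mm_def Tdefs ii)
  finally show ?thesis .
qed

lemma NN_phi: "NN i perm_phi = Tphi i"
proof -
  have "NN i perm_phi = mm (T12 i) (T23 i)"
  proof -
    have "NN i (Transposition.transpose 1 2 \<circ> Transposition.transpose 2 3) = mm (NN i (Transposition.transpose 1 2)) (NN i (Transposition.transpose 2 3))"
      by (rule NN_comp; rule tp; simp)
    then show ?thesis unfolding pphi NN_t12[OF two ii] NN_t23[OF two ii] .
  qed
  also have "\<dots> = Tphi i"
    by (intro ext, rename_tac j k, case_tac j; case_tac k) (simp_all add: mm_def Tdefs ii)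
  finally show ?thesis .
qed

lemma rho_tau1: "rho \<iota> i perm_tau1 = rhoZ (Tt1 (\<iota> i))"
  unfolding rho_def NN_tau1 iota_Tt1 ..
lemma rho_tau2: "rho \<iota> i perm_tau2 = rhoZ (Tt2 (\<iota> i))"
  unfolding rho_def NN_tau2 iota_Tt2 ..
lemma rho_phi: "rho \<iota> i perm_phi = rhoZ (Tphi (\<iota> i))"
  unfolding rho_def NN_phi iota_Tphi ..
lemma rho_tau: "rho \<iota> i perm_tau = rhoZ (T12 (\<iota> i))"
  unfolding ptau by (rule rho_t12)

lemma dsum_E:
  assumes "a \<in> dsum (jspan S) (jspan T)"
  obtains b c where "a = jadd b c" "\<And>x. x \<notin> S \<Longrightarrow> b x = 0" "\<And>x. x \<notin> T \<Longrightarrow> c x = 0"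
  using assms unfolding dsum_def jspan_def by blast

lemma tau1_a: "a \<in> dsum J00 J11 \<Longrightarrow> rho \<iota> i perm_tau1 a = a"
  unfolding J00_def J11_def
proof (erule dsum_E)
  fix b c assume a: "a = jadd b c" and b: "\<And>x. x \<notin> {U, Xo} \<Longrightarrow> b x = 0" and c: "\<And>x. x \<notin> {W I3, X I3} \<Longrightarrow> c x = 0"
  show "rho \<iota> i perm_tau1 a = a"
  proof
    fix x show "rho \<iota> i perm_tau1 a x = a x"
      unfolding rho_tau1 a using jb_cases[of x]
      by (elim disjE) (simp_all add: rhoZ_def jadd_def Tdefs b c)
  qed
qed

lemma tau1_b: "a \<in> dsum J10 J01 \<Longrightarrow> rho \<iota> i perm_tau1 a = jneg a"
  unfolding J10_def J01_def
proof (erule dsum_E)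
  fix b c assume a: "a = jadd b c" and b: "\<And>x. x \<notin> {W I1, X I1} \<Longrightarrow> b x = 0" and c: "\<And>x. x \<notin> {W I2, X I2} \<Longrightarrow> c x = 0"
  show "rho \<iota> i perm_tau1 a = jneg a"
  proof
    fix x show "rho \<iota> i perm_tau1 a x = jneg a x"
      unfolding rho_tau1 a using jb_cases[of x]
      by (elim disjE) (simp_all add: rhoZ_def jadd_def jneg_def Tdefs b c)
  qed
qed

lemma tau2_a: "a \<in> dsum J00 J10 \<Longrightarrow> rho \<iota> i perm_tau2 a = a"
  unfolding J00_def J10_def
proof (erule dsum_E)
  fix b c assume a: "a = jadd b c" and b: "\<And>x. x \<notin> {U, Xo} \<Longrightarrow> b x = 0" and c: "\<And>x. x \<notin> {W I1, X I1} \<Longrightarrow> c x = 0"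
  show "rho \<iota> i perm_tau2 a = a"
  proof
    fix x show "rho \<iota> i perm_tau2 a x = a x"
      unfolding rho_tau2 a using jb_cases[of x]
      by (elim disjE) (simp_all add: rhoZ_def jadd_def Tdefs b c)
  qed
qed

lemma tau2_b: "a \<in> dsum J01 J11 \<Longrightarrow> rho \<iota> i perm_tau2 a = jneg a"
  unfolding J01_def J11_def
proof (erule dsum_E)
  fix b c assume a: "a = jadd b c" and b: "\<And>x. x \<notin> {W I2, X I2} \<Longrightarrow> b x = 0" and c: "\<And>x. x \<notin> {W I3, X I3} \<Longrightarrow> c x = 0"
  show "rho \<iota> i perm_tau2 a = jneg a"
  proof
    fix x show "rho \<iota> i perm_tau2 a x = jneg a x"
      unfolding rho_tau2 a using jb_cases[of x]
      by (elim disjE) (simp_all add: rhoZ_def jadd_def jneg_def Tdefs b c)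
  qed
qed

lemma rhoZ_eqI: "(\<And>x. rhoZ A a x = b x) \<Longrightarrow> rhoZ A a = b" by (rule ext)

lemma pa1: "rho \<iota> i perm_phi jone = jone"
  unfolding rho_phi
  apply (rule rhoZ_eqI)
  subgoal for x using jb_cases[of x] by (elim disjE) (simp_all add: rhoZ_def jone_def yy0_def vv_def yy_def sc_def jneg_def Tdefs iisq)
  done

lemma pa2: "rho \<iota> i perm_phi yy0 = yy0"
  unfolding rho_phi
  apply (rule rhoZ_eqI)
  subgoal for x using jb_cases[of x] by (elim disjE) (simp_all add: rhoZ_def jone_def yy0_def vv_def yy_def sc_def jneg_def Tdefs iisq)
  done

lemma pa3: "rho \<iota> i perm_phi (vv \<iota> i I1) = vv \<iota> i I2"
  unfolding rho_phi
  apply (rule rhoZ_eqI)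
  subgoal for x using jb_cases[of x] by (elim disjE) (simp_all add: rhoZ_def jone_def yy0_def vv_def yy_def sc_def jneg_def Tdefs iisq)
  done

lemma pa4: "rho \<iota> i perm_phi (vv \<iota> i I2) = vv \<iota> i I3"
  unfolding rho_phi
  apply (rule rhoZ_eqI)
  subgoal for x using jb_cases[of x] by (elim disjE) (simp_all add: rhoZ_def jone_def yy0_def vv_def yy_def sc_def jneg_def Tdefs iisq)
  done

lemma pa5: "rho \<iota> i perm_phi (vv \<iota> i I3) = vv \<iota> i I1"
  unfolding rho_phi
  apply (rule rhoZ_eqI)
  subgoal for x using jb_cases[of x] by (elim disjE) (simp_all add: rhoZ_def jone_def yy0_def vv_def yy_def sc_def jneg_def Tdefs iisq)
  done

lemma pa6: "rho \<iota> i perm_phi (yy \<iota> i I1) = yy \<iota> i I2"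
  unfolding rho_phi
  apply (rule rhoZ_eqI)
  subgoal for x using jb_cases[of x] by (elim disjE) (simp_all add: rhoZ_def jone_def yy0_def vv_def yy_def sc_def jneg_def Tdefs iisq)
  done

lemma pa7: "rho \<iota> i perm_phi (yy \<iota> i I2) = yy \<iota> i I3"
  unfolding rho_phi
  apply (rule rhoZ_eqI)
  subgoal for x using jb_cases[of x] by (elim disjE) (simp_all add: rhoZ_def jone_def yy0_def vv_def yy_def sc_def jneg_def Tdefs iisq)
  done

lemma pa8: "rho \<iota> i perm_phi (yy \<iota> i I3) = yy \<iota> i I1"
  unfolding rho_phi
  apply (rule rhoZ_eqI)
  subgoal for x using jb_cases[of x] by (elim disjE) (simp_all add: rhoZ_def jone_def yy0_def vv_def yy_def sc_def jneg_def Tdefs iisq)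
  done

lemma phi_vals:
  "rho \<iota> i perm_phi jone = jone" "rho \<iota> i perm_phi yy0 = yy0"
  "rho \<iota> i perm_phi (vv \<iota> i k) = vv \<iota> i (nxt k)"
  "rho \<iota> i perm_phi (yy \<iota> i k) = yy \<iota> i (nxt k)"
  using pa1 pa2 pa3 pa4 pa5 pa6 pa7 pa8 by (cases k; simp)+

lemma tv0: "rho \<iota> i perm_tau jone = jone"
  unfolding rho_tau
  apply (rule rhoZ_eqI)
  subgoal for x using jb_cases[of x] by (elim disjE) (simp_all add: rhoZ_def jone_def yy0_def vv_def yy_def sc_def jneg_def Tdefs iisq)
  done

lemma tv1: "rho \<iota> i perm_tau yy0 = yy0"
  unfolding rho_tau
  apply (rule rhoZ_eqI)
  subgoal for x using jb_cases[of x] by (elim disjE) (simp_all add: rhoZ_def jone_def yy0_def vv_def yy_def sc_def jneg_def Tdefs iisq)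
  done

lemma tv2: "rho \<iota> i perm_tau (vv \<iota> i I1) = jneg (vv \<iota> i I2)"
  unfolding rho_tau
  apply (rule rhoZ_eqI)
  subgoal for x using jb_cases[of x] by (elim disjE) (simp_all add: rhoZ_def jone_def yy0_def vv_def yy_def sc_def jneg_def Tdefs iisq)
  done

lemma tv3: "rho \<iota> i perm_tau (vv \<iota> i I2) = jneg (vv \<iota> i I1)"
  unfolding rho_tau
  apply (rule rhoZ_eqI)
  subgoal for x using jb_cases[of x] by (elim disjE) (simp_all add: rhoZ_def jone_def yy0_def vv_def yy_def sc_def jneg_def Tdefs iisq)
  done

lemma tv4: "rho \<iota> i perm_tau (vv \<iota> i I3) = jneg (vv \<iota> i I3)"
  unfolding rho_tau
  apply (rule rhoZ_eqI)
  subgoal for x using jb_cases[of x] by (elim disjE) (simp_all add: rhoZ_def jone_def yy0_def vv_def yy_def sc_def jneg_def Tdefs iisq)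
  done

lemma tv5: "rho \<iota> i perm_tau (yy \<iota> i I1) = jneg (yy \<iota> i I2)"
  unfolding rho_tau
  apply (rule rhoZ_eqI)
  subgoal for x using jb_cases[of x] by (elim disjE) (simp_all add: rhoZ_def jone_def yy0_def vv_def yy_def sc_def jneg_def Tdefs iisq)
  done

lemma tv6: "rho \<iota> i perm_tau (yy \<iota> i I2) = jneg (yy \<iota> i I1)"
  unfolding rho_tau
  apply (rule rhoZ_eqI)
  subgoal for x using jb_cases[of x] by (elim disjE) (simp_all add: rhoZ_def jone_def yy0_def vv_def yy_def sc_def jneg_def Tdefs iisq)
  done

lemma tv7: "rho \<iota> i perm_tau (yy \<iota> i I3) = jneg (yy \<iota> i I3)"
  unfolding rho_tau
  apply (rule rhoZ_eqI)
  subgoal for x using jb_cases[of x] by (elim disjE) (simp_all add: rhoZ_def jone_def yy0_def vv_def yy_def sc_def jneg_def Tdefs iisq)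
  done

lemmas tau_vals = tv0 tv1 tv2 tv3 tv4 tv5 tv6 tv7

end

theorem theorem5p1:
  fixes \<iota> :: "'f::field \<Rightarrow> 'z::comm_ring_1"
    and d :: "'z \<Rightarrow> 'z"
    and i :: 'f
  assumes char_ne_2: "(2::'f) \<noteq> 0"
    and iota_add: "\<And>a b. \<iota> (a + b) = \<iota> a + \<iota> b"
    and iota_mult: "\<And>a b. \<iota> (a * b) = \<iota> a * \<iota> b"
    and iota_one: "\<iota> 1 = 1"
    and d_add: "\<And>f g. d (f + g) = d f + d g"
    and d_scal: "\<And>c f. d (\<iota> c * f) = \<iota> c * d f"
    and d_leibniz: "\<And>f g. d (f * g) = f * d g + d f * g"
    and ZdZ: "\<And>z. \<exists>n (c :: nat \<Rightarrow> 'f) f g. z = (\<Sum>k<n. \<iota> (c k) * (f k * d (g k)))"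
    and sqrt_m1: "i * i = - 1"
  shows "\<exists>\<rho>. \<rho> \<in> hom (sym_group 4) (aut_group \<iota> d)
      \<and> inj_on \<rho> (carrier (sym_group 4))
      \<and> (\<forall>p \<in> carrier (sym_group 4). even_map (\<rho> p) \<and> Z_linear (\<rho> p))
      \<and> (\<forall>a \<in> dsum J00 J11. \<rho> perm_tau1 a = a)
      \<and> (\<forall>a \<in> dsum J10 J01. \<rho> perm_tau1 a = jneg a)
      \<and> (\<forall>a \<in> dsum J00 J10. \<rho> perm_tau2 a = a)
      \<and> (\<forall>a \<in> dsum J01 J11. \<rho> perm_tau2 a = jneg a)
      \<and> \<rho> perm_phi jone = jone \<and> \<rho> perm_phi yy0 = yy0
      \<and> (\<forall>k. \<rho> perm_phi (vv \<iota> i k) = vv \<iota> i (nxt k))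
      \<and> (\<forall>k. \<rho> perm_phi (yy \<iota> i k) = yy \<iota> i (nxt k))
      \<and> \<rho> perm_tau jone = jone \<and> \<rho> perm_tau yy0 = yy0
      \<and> \<rho> perm_tau (vv \<iota> i I1) = jneg (vv \<iota> i I2)
      \<and> \<rho> perm_tau (vv \<iota> i I2) = jneg (vv \<iota> i I1)
      \<and> \<rho> perm_tau (vv \<iota> i I3) = jneg (vv \<iota> i I3)
      \<and> \<rho> perm_tau (yy \<iota> i I1) = jneg (yy \<iota> i I2)
      \<and> \<rho> perm_tau (yy \<iota> i I2) = jneg (yy \<iota> i I1)
      \<and> \<rho> perm_tau (yy \<iota> i I3) = jneg (yy \<iota> i I3)"
proof -
  interpret ck \<iota> d i
    by unfold_locales (use char_ne_2 iota_add iota_mult iota_one d_add d_scal sqrt_m1 in auto)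
  have hom: "rho \<iota> i \<in> hom (sym_group 4) (aut_group \<iota> d)"
    unfolding hom_def by (auto simp: sym_group_carrier sym_group_mult aut_group_def aut_rho rho_comp)
  have inj: "inj_on (rho \<iota> i) (carrier (sym_group 4))"
    by (auto simp: inj_on_def sym_group_carrier intro: rho_inj)
  have ev: "\<forall>p \<in> carrier (sym_group 4). even_map (rho \<iota> i p) \<and> Z_linear (rho \<iota> i p)"
    by (simp add: rho_def rhoZ_even rhoZ_Zlin)
  show ?thesis
    apply (rule exI[of _ "rho \<iota> i"])
    using hom inj ev tau1_a tau1_b tau2_a tau2_b phi_vals tau_vals by blast
qed

end
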